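(* Let $d,k$ be positive integers, let $\mathscr{A}\subseteq\mathbb{R}^d$, $\mathscr{B}\subseteq\mathbb{R}^k$, let $\boldsymbol{f}:\mathscr{A}\to\mathbb{R}^k$ and let $g:\mathscr{A}\to\mathbb{R}$. Let $X$ be a random vector in $\mathbb{R}^d$ such that $\Pr\{X\in\mathscr{A}\}=1$, $\mathbb{E}[\boldsymbol{f}(X)]$ exists and $\mathbb{E}[\boldsymbol{f}(X)]\in\mathscr{B}$, and such that $\mathbb{E}[g(X)]$ exists (as a finite real number). Let $\mathscr{Y}$ be the family of all discrete random vectors $Y$ in $\mathbb{R}^d$ such that $\Pr\{Y\in\mathscr{A}\}=1$, $\mathbb{E}[\boldsymbol{f}(Y)]\in\mathscr{B}$, and $Y$ has at most $k+1$ distinct possible values. Then \[ \mathbb{E}[g(X)]\le \sup_{Y\in\mathscr{Y}}\mathbb{E}[g(Y)]. \]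
   Context: A vector $x$ is a possible value of a discrete random vector $Y$ if $\Pr\{Y=x\}>0$. All sets and functions involved are assumed measurable so that the probabilities and expectations make sense. The supremum of an empty set is defined to be $0$. *)

theory Defs
  imports "HOL-Probability.Probability"
begin

definition sup0 :: "ereal set \<Rightarrow> ereal" where
  "sup0 S = (if S = {} then 0 else Sup S)"

text \<open>Distributions of discrete random vectors Y in R^d with Pr{Y in A} = 1,
  E[f(Y)] in B and at most k+1 distinct possible values. Possible values are
  exactly the points of the support set_pmf.\<close>
definition admissible_dists ::
  "('d::finite) itself \<Rightarrow> nat \<Rightarrow> (real^'d) set \<Rightarrow> (real^'k::finite) set \<Rightarrow>
   (real^'d \<Rightarrow> real^'k) \<Rightarrow> (real^'d) pmf set" where
  "admissible_dists _ k A B f =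
     {p. finite (set_pmf p) \<and> card (set_pmf p) \<le> k + 1 \<and> set_pmf p \<subseteq> A
         \<and> measure_pmf.expectation p f \<in> B}"

end

theory Submission imports Defs "HOL-Analysis.Analysis"
begin

lemma mean_in_hull_aux:
  fixes Z :: "'a \<Rightarrow> 'n::euclidean_space"
  assumes P: "prob_space M" and intZ: "integrable M Z"
  shows "\<forall>S. nat (aff_dim S + 1) = n \<longrightarrow> (AE \<omega> in M. Z \<omega> \<in> S) \<longrightarrow> integral\<^sup>L M Z \<in> convex hull S"
proof (induction n rule: less_induct)
  case (less n)
  interpret prob_space M by (rule P)
  show ?case
  proof (intro allI impI)
    fix S :: "'n set" assume n: "nat (aff_dim S + 1) = n" and ae: "AE \<omega> in M. Z \<omega> \<in> S"
    define m where "m = integral\<^sup>L M Z"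
    define C where "C = convex hull S"
    have cC: "convex C" unfolding C_def by simp
    have SC: "S \<subseteq> C" unfolding C_def by (rule hull_subset)
    have Sne: "S \<noteq> {}"
    proof
      assume "S = {}"
      with ae have "AE \<omega> in M. False" by simp
      then show False by (simp add: AE_False)
    qed
    have intc: "\<And>c::real. integral\<^sup>L M (\<lambda>_. c) = c" by (simp add: prob_space)
    show "integral\<^sup>L M Z \<in> convex hull S"
    proof (rule ccontr)
      assume "integral\<^sup>L M Z \<notin> convex hull S"
      then have nm: "m \<notin> C" by (simp add: m_def C_def)
      show False
      proof (cases "m \<in> closure C")
        case False
        obtain a b where ab: "a \<bullet> m < b" "\<forall>x\<in>closure C. a \<bullet> x > b"
          using separating_hyperplane_closed_point[OF convex_closure[OF cC] closed_closure False] by blast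
        have "AE \<omega> in M. b \<le> a \<bullet> Z \<omega>"
          using ae apply eventually_elim using ab(2) SC closure_subset by fastforce
        then have "integral\<^sup>L M (\<lambda>_. b) \<le> integral\<^sup>L M (\<lambda>\<omega>. a \<bullet> Z \<omega>)"
          by (intro integral_mono_AE) (auto simp: intZ)
        then have "b \<le> a \<bullet> m" using intZ by (simp add: m_def prob_space)
        then show False using ab(1) by simp
      next
        case True
        have "m \<notin> rel_interior (closure C)"
          using convex_rel_interior_closure[OF cC] rel_interior_subset nm by auto
        then obtain a where a: "a \<noteq> 0" "\<And>y. y \<in> closure C \<Longrightarrow> a \<bullet> m \<le> a \<bullet> y"
          "\<And>y. y \<in> rel_interior (closure C) \<Longrightarrow> a \<bullet> m < a \<bullet> y"
          using supporting_hyperplane_rel_boundary[OF convex_closure[OF cC] True] by metis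
        have ae2: "AE \<omega> in M. 0 \<le> a \<bullet> Z \<omega> - a \<bullet> m"
          using ae apply eventually_elim using a(2) SC closure_subset by fastforce
        have int2: "integrable M (\<lambda>\<omega>. a \<bullet> Z \<omega> - a \<bullet> m)" using intZ by auto
        have "integral\<^sup>L M (\<lambda>\<omega>. a \<bullet> Z \<omega> - a \<bullet> m) = 0"
          using intZ by (simp add: m_def prob_space)
        then have ae3: "AE \<omega> in M. a \<bullet> Z \<omega> - a \<bullet> m = 0"
          using integral_nonneg_eq_0_iff_AE[OF int2 ae2] by simp
        define S' where "S' = S \<inter> {y. a \<bullet> y = a \<bullet> m}"
        have aeS': "AE \<omega> in M. Z \<omega> \<in> S'"
          using ae ae3 unfolding S'_def by eventually_elim auto
        have "C \<noteq> {}" using Sne SC by auto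
        then obtain y0 where y0: "y0 \<in> rel_interior C"
          using rel_interior_eq_empty[OF cC] by auto
        then have "a \<bullet> m < a \<bullet> y0"
          using a(3) convex_rel_interior_closure[OF cC] by auto
        have "\<not> S \<subseteq> {y. a \<bullet> y = a \<bullet> m}"
        proof
          assume "S \<subseteq> {y. a \<bullet> y = a \<bullet> m}"
          then have "C \<subseteq> {y. a \<bullet> y = a \<bullet> m}"
            unfolding C_def by (intro hull_minimal) (auto simp: convex_hyperplane)
          then show False using y0 rel_interior_subset \<open>a \<bullet> m < a \<bullet> y0\<close> by fastforce
        qed
        then obtain s where s: "s \<in> S" "a \<bullet> s \<noteq> a \<bullet> m" by auto
        have "affine hull S' \<subseteq> {y. a \<bullet> y = a \<bullet> m}"
          unfolding S'_def by (intro hull_minimal) (auto simp: affine_hyperplane)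
        then have "s \<notin> affine hull S'" using s by auto
        moreover have "s \<in> affine hull S" using s by (simp add: hull_inc)
        moreover have "affine hull S' \<subseteq> affine hull S" unfolding S'_def by (intro hull_mono) auto
        ultimately have "affine hull S' \<subset> affine hull S" by blast
        then have "aff_dim S' < aff_dim S" by (rule aff_dim_psubset)
        then have "nat (aff_dim S' + 1) < n" using n aff_dim_geq[of S'] by linarith
        then have "m \<in> convex hull S'" using less aeS' m_def by blast
        moreover have "convex hull S' \<subseteq> C" unfolding C_def S'_def by (intro hull_mono) auto
        ultimately show False using nm by blast
      qed
    qed
  qed
qed

lemma mean_in_hull:
  fixes Z :: "'a \<Rightarrow> 'n::euclidean_space"
  assumes "prob_space M" "integrable M Z" "AE \<omega> in M. Z \<omega> \<in> S"
  shows "integral\<^sup>L M Z \<in> convex hull S"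
  using mean_in_hull_aux[OF assms(1,2)] assms(3) by blast

lemma reduce_step:
  fixes F :: "'x \<Rightarrow> 'v::real_vector" and G :: "'x \<Rightarrow> real"
  assumes fin: "finite P" and w0: "\<forall>x\<in>P. 0 \<le> w x"
    and mu1: "sum \<mu> P = 0" and mu2: "(\<Sum>x\<in>P. \<mu> x *\<^sub>R F x) = 0" and mu3: "(\<Sum>x\<in>P. \<mu> x * G x) \<ge> 0"
    and neg: "\<exists>x\<in>P. \<mu> x < 0"
  shows "\<exists>w1 x0. x0 \<in> P \<and> w1 x0 = 0 \<and> (\<forall>x\<in>P. 0 \<le> w1 x) \<and> sum w1 P = sum w P
     \<and> (\<Sum>x\<in>P. w1 x *\<^sub>R F x) = (\<Sum>x\<in>P. w x *\<^sub>R F x) \<and> (\<Sum>x\<in>P. w1 x * G x) \<ge> (\<Sum>x\<in>P. w x * G x)"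
proof -
  define N where "N = {x\<in>P. \<mu> x < 0}"
  have finN: "finite N" "N \<noteq> {}" using fin neg by (auto simp: N_def)
  define t where "t = Min ((\<lambda>x. w x / (- \<mu> x)) ` N)"
  have "t \<in> (\<lambda>x. w x / (- \<mu> x)) ` N" unfolding t_def using finN by (intro Min_in) auto
  then obtain x0 where x0: "x0 \<in> N" "t = w x0 / (- \<mu> x0)" by blast
  have tle: "t \<le> w x / (- \<mu> x)" if "x \<in> N" for x
    unfolding t_def using finN that by (intro Min_le) auto
  have "0 \<le> w x0" "0 < - \<mu> x0" using x0 w0 by (auto simp: N_def)
  then have t0: "0 \<le> t" unfolding x0(2) by (rule divide_nonneg_pos)
  define w1 where "w1 = (\<lambda>x. w x + t * \<mu> x)"
  have "w1 x0 = 0" using x0 by (auto simp: w1_def N_def field_simps)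
  moreover have "\<forall>x\<in>P. 0 \<le> w1 x"
  proof
    fix x assume x: "x \<in> P"
    show "0 \<le> w1 x"
    proof (cases "\<mu> x < 0")
      case True
      then have "t \<le> w x / (- \<mu> x)" using tle x by (auto simp: N_def)
      moreover have "0 < - \<mu> x" using True by simp
      ultimately have "t * (- \<mu> x) \<le> w x" by (metis pos_le_divide_eq)
      then show ?thesis by (simp add: w1_def)
    next
      case False
      then show ?thesis using t0 w0 x by (simp add: w1_def)
    qed
  qed
  moreover have "sum w1 P = sum w P"
    using mu1 by (simp add: w1_def sum.distrib sum_distrib_left[symmetric])
  moreover have "(\<Sum>x\<in>P. w1 x *\<^sub>R F x) = (\<Sum>x\<in>P. w x *\<^sub>R F x)"
  proof -
    have "(\<Sum>x\<in>P. w1 x *\<^sub>R F x) = (\<Sum>x\<in>P. w x *\<^sub>R F x) + t *\<^sub>R (\<Sum>x\<in>P. \<mu> x *\<^sub>R F x)"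
      by (simp add: w1_def scaleR_add_left sum.distrib scaleR_sum_right)
    then show ?thesis using mu2 by simp
  qed
  moreover have "(\<Sum>x\<in>P. w1 x * G x) \<ge> (\<Sum>x\<in>P. w x * G x)"
  proof -
    have "(\<Sum>x\<in>P. w1 x * G x) = (\<Sum>x\<in>P. w x * G x) + t * (\<Sum>x\<in>P. \<mu> x * G x)"
      by (simp add: w1_def distrib_right sum.distrib sum_distrib_left mult.assoc)
    then show ?thesis using mu3 t0 by simp
  qed
  ultimately show ?thesis using x0 by (auto simp: N_def)
qed

lemma reduce_aux:
  fixes F :: "'x \<Rightarrow> real^'k::finite" and G :: "'x \<Rightarrow> real"
  shows "\<forall>P (w::'x\<Rightarrow>real). card P = n \<longrightarrow> finite P \<longrightarrow> (\<forall>x\<in>P. 0 \<le> w x) \<longrightarrow> sum w P = 1 \<longrightarrow>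
    (\<exists>P' w'. P' \<subseteq> P \<and> card P' \<le> CARD('k) + 1 \<and> (\<forall>x\<in>P'. 0 \<le> w' x) \<and> sum w' P' = 1
      \<and> (\<Sum>x\<in>P'. w' x *\<^sub>R F x) = (\<Sum>x\<in>P. w x *\<^sub>R F x)
      \<and> (\<Sum>x\<in>P'. w' x * G x) \<ge> (\<Sum>x\<in>P. w x * G x))"
proof (induction n rule: less_induct)
  case (less n)
  show ?case
  proof (intro allI impI)
    fix P :: "'x set" and w :: "'x \<Rightarrow> real" assume n: "card P = n" and fin: "finite P"
      and w0: "\<forall>x\<in>P. 0 \<le> w x" and w1: "sum w P = 1"
    show "\<exists>P' w'. P' \<subseteq> P \<and> card P' \<le> CARD('k) + 1 \<and> (\<forall>x\<in>P'. 0 \<le> w' x) \<and> sum w' P' = 1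
      \<and> (\<Sum>x\<in>P'. w' x *\<^sub>R F x) = (\<Sum>x\<in>P. w x *\<^sub>R F x)
      \<and> (\<Sum>x\<in>P'. w' x * G x) \<ge> (\<Sum>x\<in>P. w x * G x)"
    proof (cases "card P \<le> CARD('k) + 1")
      case True
      then show ?thesis using w0 w1 by blast
    next
      case big: False
      have "\<exists>\<mu>. sum \<mu> P = 0 \<and> (\<Sum>x\<in>P. \<mu> x *\<^sub>R F x) = 0 \<and> (\<Sum>x\<in>P. \<mu> x * G x) \<ge> 0 \<and> (\<exists>x\<in>P. \<mu> x < 0)"
      proof -
        have "\<exists>\<mu>. sum \<mu> P = 0 \<and> (\<Sum>x\<in>P. \<mu> x *\<^sub>R F x) = 0 \<and> (\<exists>x\<in>P. \<mu> x \<noteq> 0)"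
        proof (cases "inj_on (\<lambda>x. (F x, 1::real)) P")
          case inj: True
          define V where "V = (\<lambda>x. (F x, 1::real)) ` P"
          have cV: "card V = card P" unfolding V_def using inj by (simp add: card_image)
          have finV: "finite V" unfolding V_def using fin by simp
          have "\<not> independent V"
          proof
            assume "independent V"
            then have "card V \<le> DIM((real^'k) \<times> real)" by (rule independent_bound[THEN conjunct2])
            then show False using cV big by simp
          qed
          then obtain u where u: "\<exists>v\<in>V. u v \<noteq> 0" "(\<Sum>v\<in>V. u v *\<^sub>R v) = 0"
            using real_vector.dependent_finite[OF finV] by blast
          define \<mu> where "\<mu> x = u (F x, 1)" for x
          have "(\<Sum>x\<in>P. \<mu> x *\<^sub>R (F x, 1::real)) = 0"
            using u(2) unfolding V_def \<mu>_def by (simp add: sum.reindex[OF inj] o_def)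
          then have "(\<Sum>x\<in>P. (\<mu> x *\<^sub>R F x, \<mu> x)) = 0" by simp
          then have "(\<Sum>x\<in>P. \<mu> x *\<^sub>R F x) = 0 \<and> sum \<mu> P = 0"
            by (metis (no_types, lifting) fst_sum snd_sum fst_zero snd_zero fst_conv snd_conv sum.cong)
          moreover have "\<exists>x\<in>P. \<mu> x \<noteq> 0" using u(1) unfolding V_def \<mu>_def by auto
          ultimately show ?thesis by blast
        next
          case False
          then obtain x y where xy: "x \<in> P" "y \<in> P" "x \<noteq> y" "F x = F y"
            unfolding inj_on_def by auto
          define \<mu> where "\<mu> z = (if z = y then 1 else 0) - (if z = x then 1 else (0::real))" for z
          have "sum \<mu> P = 0" using xy fin by (simp add: \<mu>_def sum_subtractf)
          moreover have "(\<Sum>z\<in>P. \<mu> z *\<^sub>R F z) = 0"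
          proof -
            have "(\<Sum>z\<in>P. \<mu> z *\<^sub>R F z) = (\<Sum>z\<in>P. (if z = y then F z else 0)) - (\<Sum>z\<in>P. (if z = x then F z else 0))"
              unfolding sum_subtractf[symmetric] by (rule sum.cong) (auto simp: \<mu>_def)
            then show ?thesis using xy fin by simp
          qed
          moreover have "\<mu> x \<noteq> 0" using xy by (simp add: \<mu>_def)
          ultimately show ?thesis using xy by blast
        qed
        then obtain \<nu> where nu: "sum \<nu> P = 0" "(\<Sum>x\<in>P. \<nu> x *\<^sub>R F x) = 0" "\<exists>x\<in>P. \<nu> x \<noteq> 0"
          by blast
        have negex: "\<exists>x\<in>P. \<rho> x < 0" if "sum \<rho> P = 0" "\<exists>x\<in>P. \<rho> x \<noteq> 0" for \<rho> :: "'x \<Rightarrow> real"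
        proof (rule ccontr)
          assume "\<not> (\<exists>x\<in>P. \<rho> x < 0)"
          then have "\<forall>x\<in>P. 0 \<le> \<rho> x" by auto
          then have "\<forall>x\<in>P. \<rho> x = 0" using sum_nonneg_eq_0_iff[OF fin] that(1) by blast
          then show False using that(2) by blast
        qed
        show ?thesis
        proof (cases "(\<Sum>x\<in>P. \<nu> x * G x) \<ge> 0")
          case True
          then show ?thesis using nu negex[of \<nu>] by blast
        next
          case False
          have "sum (\<lambda>x. - \<nu> x) P = 0" using nu(1) by (simp add: sum_negf)
          moreover have "(\<Sum>x\<in>P. (- \<nu> x) *\<^sub>R F x) = 0" using nu(2) by (simp add: sum_negf)
          moreover have "(\<Sum>x\<in>P. (- \<nu> x) * G x) \<ge> 0" using False by (simp add: sum_negf)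
          moreover have "\<exists>x\<in>P. - \<nu> x \<noteq> 0" using nu(3) by simp
          ultimately show ?thesis using negex[of "\<lambda>x. - \<nu> x"] by blast
        qed
      qed
      then obtain \<mu> where mu: "sum \<mu> P = 0" "(\<Sum>x\<in>P. \<mu> x *\<^sub>R F x) = 0" "(\<Sum>x\<in>P. \<mu> x * G x) \<ge> 0" "\<exists>x\<in>P. \<mu> x < 0"
        by blast
      obtain wa x0 where wa: "x0 \<in> P" "wa x0 = 0" "\<forall>x\<in>P. 0 \<le> wa x" "sum wa P = sum w P"
        "(\<Sum>x\<in>P. wa x *\<^sub>R F x) = (\<Sum>x\<in>P. w x *\<^sub>R F x)" "(\<Sum>x\<in>P. wa x * G x) \<ge> (\<Sum>x\<in>P. w x * G x)"
        using reduce_step[OF fin w0 mu] by blast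
      define P1 where "P1 = P - {x0}"
      have c1: "card P1 < n" using n fin wa(1) unfolding P1_def
        by (metis card_Diff1_less)
      have s1: "sum wa P1 = sum wa P" "(\<Sum>x\<in>P1. wa x *\<^sub>R F x) = (\<Sum>x\<in>P. wa x *\<^sub>R F x)"
        "(\<Sum>x\<in>P1. wa x * G x) = (\<Sum>x\<in>P. wa x * G x)"
        unfolding P1_def using fin wa(1,2) by (simp_all add: sum.remove)
      have "finite P1" "\<forall>x\<in>P1. 0 \<le> wa x" "sum wa P1 = 1" using fin wa(3,4) s1 w1 by (auto simp: P1_def)
      then obtain P' w' where "P' \<subseteq> P1" "card P' \<le> CARD('k) + 1" "\<forall>x\<in>P'. 0 \<le> w' x" "sum w' P' = 1"
        "(\<Sum>x\<in>P'. w' x *\<^sub>R F x) = (\<Sum>x\<in>P1. wa x *\<^sub>R F x)"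
        "(\<Sum>x\<in>P'. w' x * G x) \<ge> (\<Sum>x\<in>P1. wa x * G x)"
        using less[OF c1, rule_format, of P1 wa] by blast
      then show ?thesis using s1 wa(5,6) unfolding P1_def by (intro exI[of _ P'] exI[of _ w']) auto
    qed
  qed
qed

theorem theorem3:
  fixes M :: "'a measure"
    and A :: "(real^'d::finite) set" and B :: "(real^'k::finite) set"
    and f :: "real^'d \<Rightarrow> real^'k" and g :: "real^'d \<Rightarrow> real"
    and X :: "'a \<Rightarrow> real^'d"
  assumes "prob_space M"
    and "A \<in> sets borel" and "B \<in> sets borel"
    and "f \<in> borel_measurable borel" and "g \<in> borel_measurable borel"
    and "X \<in> borel_measurable M"
    and "measure M {\<omega> \<in> space M. X \<omega> \<in> A} = 1"
    and "integrable M (\<lambda>\<omega>. f (X \<omega>))"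
    and "(\<integral>\<omega>. f (X \<omega>) \<partial>M) \<in> B"
    and "integrable M (\<lambda>\<omega>. g (X \<omega>))"
  shows "ereal (\<integral>\<omega>. g (X \<omega>) \<partial>M)
           \<le> sup0 {ereal (measure_pmf.expectation p g) | p.
                     p \<in> admissible_dists TYPE('d) CARD('k) A B f}"
proof -
  interpret prob_space M by fact
  define Ef where "Ef = (\<integral>\<omega>. f (X \<omega>) \<partial>M)"
  define Eg where "Eg = (\<integral>\<omega>. g (X \<omega>) \<partial>M)"
  define Z where "Z = (\<lambda>\<omega>. (f (X \<omega>), g (X \<omega>)))"
  have Zeq: "Z = (\<lambda>\<omega>. (f (X \<omega>), 0) + (0, g (X \<omega>)))" unfolding Z_def by simp
  have i1: "integrable M (\<lambda>\<omega>. (f (X \<omega>), 0::real))"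
    using integrable_bounded_linear[OF bounded_linear_Pair[OF bounded_linear_ident bounded_linear_zero] assms(8)] by simp
  have i2: "integrable M (\<lambda>\<omega>. (0::real^'k, g (X \<omega>)))"
    using integrable_bounded_linear[OF bounded_linear_Pair[OF bounded_linear_zero bounded_linear_ident] assms(10)] by simp
  have intZ: "integrable M Z" unfolding Zeq by (rule Bochner_Integration.integrable_add[OF i1 i2])
  have "integral\<^sup>L M (\<lambda>\<omega>. (f (X \<omega>), 0::real)) = (Ef, 0)"
    using integral_bounded_linear[OF bounded_linear_Pair[OF bounded_linear_ident bounded_linear_zero] assms(8)]
    by (simp add: Ef_def)
  moreover have "integral\<^sup>L M (\<lambda>\<omega>. (0::real^'k, g (X \<omega>))) = (0, Eg)"
    using integral_bounded_linear[OF bounded_linear_Pair[OF bounded_linear_zero bounded_linear_ident] assms(10)]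
    by (simp add: Eg_def)
  ultimately have EZ: "integral\<^sup>L M Z = (Ef, Eg)" unfolding Zeq Bochner_Integration.integral_add[OF i1 i2] by simp
  define S where "S = (\<lambda>x. (f x, g x)) ` A"
  have "AE \<omega> in M. \<omega> \<in> {\<omega> \<in> space M. X \<omega> \<in> A}" using assms(7) by (intro AE_prob_1)
  then have "AE \<omega> in M. Z \<omega> \<in> S" by eventually_elim (auto simp: Z_def S_def)
  from mean_in_hull[OF assms(1) intZ this] EZ have "(Ef, Eg) \<in> convex hull S" by simp
  then obtain T u where T: "finite T" "T \<subseteq> S" "\<forall>x\<in>T. 0 \<le> u x" "sum u T = 1"
    "(\<Sum>v\<in>T. u v *\<^sub>R v) = (Ef, Eg)"
    unfolding convex_hull_explicit by blast
  define c where "c t = (SOME x. x \<in> A \<and> (f x, g x) = t)" for t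
  have c: "c t \<in> A \<and> (f (c t), g (c t)) = t" if "t \<in> T" for t
  proof -
    have "\<exists>x. x \<in> A \<and> (f x, g x) = t" using that T(2) by (auto simp: S_def)
    then show ?thesis unfolding c_def by (rule someI_ex)
  qed
  have injc: "inj_on c T" by (metis c inj_onI)
  define P where "P = c ` T"
  define w where "w x = u (f x, g x)" for x
  have finP: "finite P" using T(1) by (simp add: P_def)
  have PA: "P \<subseteq> A" using c by (auto simp: P_def)
  have sP: "sum h P = (\<Sum>t\<in>T. h (c t))" for h :: "_ \<Rightarrow> 'z::comm_monoid_add"
    unfolding P_def by (simp add: sum.reindex[OF injc])
  have wc: "w (c t) = u t" if "t \<in> T" for t using c[OF that] by (simp add: w_def)
  have w0: "\<forall>x\<in>P. 0 \<le> w x" using T(3) wc by (auto simp: P_def)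
  have w1: "sum w P = 1" using T(4) wc by (simp add: sP)
  have "(\<Sum>x\<in>P. w x *\<^sub>R f x) = (\<Sum>t\<in>T. fst (u t *\<^sub>R t))"
    unfolding sP by (rule sum.cong) (use c wc in auto)
  also have "\<dots> = fst (\<Sum>v\<in>T. u v *\<^sub>R v)" by (simp add: fst_sum)
  also have "\<dots> = Ef" using T(5) by simp
  finally have wf: "(\<Sum>x\<in>P. w x *\<^sub>R f x) = Ef" .
  have "(\<Sum>x\<in>P. w x * g x) = (\<Sum>t\<in>T. snd (u t *\<^sub>R t))"
    unfolding sP by (rule sum.cong) (use c wc in auto)
  also have "\<dots> = snd (\<Sum>v\<in>T. u v *\<^sub>R v)" by (simp add: snd_sum)
  also have "\<dots> = Eg" using T(5) by simp
  finally have wg: "(\<Sum>x\<in>P. w x * g x) = Eg" .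
  obtain P' w' where R: "P' \<subseteq> P" "card P' \<le> CARD('k) + 1" "\<forall>x\<in>P'. 0 \<le> w' x" "sum w' P' = 1"
      "(\<Sum>x\<in>P'. w' x *\<^sub>R f x) = Ef" "(\<Sum>x\<in>P'. w' x * g x) \<ge> Eg"
    using reduce_aux[where F=f and G=g and n="card P", rule_format, of P w] finP w0 w1 wf wg by auto
  have finP': "finite P'" using R(1) finP by (rule finite_subset)
  define h where "h x = (if x \<in> P' then w' x else 0)" for x
  have h0: "\<And>x. 0 \<le> h x" using R(3) by (simp add: h_def)
  have h1: "(\<integral>\<^sup>+x. h x \<partial>count_space UNIV) = 1"
  proof -
    have "(\<integral>\<^sup>+x. ennreal (h x) \<partial>count_space UNIV) = (\<Sum>x\<in>P'. ennreal (h x))"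
      by (rule nn_integral_count_space'[OF finP']) (auto simp: h_def)
    also have "\<dots> = ennreal (\<Sum>x\<in>P'. h x)" using h0 by (simp add: sum_ennreal)
    also have "(\<Sum>x\<in>P'. h x) = 1" using R(4) by (simp add: h_def)
    finally show ?thesis by simp
  qed
  define p where "p = embed_pmf h"
  have pmfp: "pmf p x = h x" for x unfolding p_def by (rule pmf_embed_pmf[OF h0 h1])
  have setp: "set_pmf p \<subseteq> P'" by (auto simp: set_pmf_eq pmfp h_def)
  have "measure_pmf.expectation p f = (\<Sum>a\<in>P'. pmf p a *\<^sub>R f a)"
    by (rule integral_measure_pmf[OF finP']) (use setp in auto)
  also have "\<dots> = (\<Sum>a\<in>P'. w' a *\<^sub>R f a)" by (rule sum.cong) (auto simp: pmfp h_def)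
  finally have Epf: "measure_pmf.expectation p f = Ef" using R(5) by simp
  have "measure_pmf.expectation p g = (\<Sum>a\<in>P'. pmf p a *\<^sub>R g a)"
    by (rule integral_measure_pmf[OF finP']) (use setp in auto)
  also have "\<dots> = (\<Sum>a\<in>P'. w' a * g a)" by (rule sum.cong) (auto simp: pmfp h_def)
  finally have Epg: "measure_pmf.expectation p g = (\<Sum>x\<in>P'. w' x * g x)" .
  have "p \<in> admissible_dists TYPE('d) CARD('k) A B f"
    unfolding admissible_dists_def
    using finite_subset[OF setp finP'] card_mono[OF finP' setp] R(2) setp R(1) PA Epf assms(9)
    by (auto simp: Ef_def)
  then have mem: "ereal (measure_pmf.expectation p g) \<in> {ereal (measure_pmf.expectation p g) | p.
                     p \<in> admissible_dists TYPE('d) CARD('k) A B f}" by blast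
  then have "ereal (measure_pmf.expectation p g) \<le> sup0 {ereal (measure_pmf.expectation p g) | p.
                     p \<in> admissible_dists TYPE('d) CARD('k) A B f}"
    unfolding sup0_def by (auto intro: Sup_upper)
  moreover have "ereal Eg \<le> ereal (measure_pmf.expectation p g)" using Epg R(6) by simp
  ultimately show ?thesis unfolding Eg_def by (rule order_trans[rotated])
qed

end
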